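(* Let $\phi\in(0,1)$, $\alpha_\infty>0$, $K_0>0$, $\eta>0$, $\rho_f>0$, $\Lambda>0$, and set $\nu:=\eta/\rho_f$, $F:=\alpha_\infty/\phi$, $C_2:=FK_0/\nu$, $C_1:=4C_2FK_0/\Lambda^2$. For real $\omega$ define the JKD permeability $$K^D(\omega)=\frac{K_0}{\sqrt{1-\frac{4i\alpha_\infty^2K_0^2\rho_f\omega}{\eta\Lambda^2\phi^2}}-\frac{i\alpha_\infty K_0\rho_f\omega}{\eta\phi}}=\frac{K_0}{\sqrt{1-iC_1\omega}-iC_2\omega},$$ with the principal square root. Let $$\xi_p:=\frac{C_1+\sqrt{C_1^2+4C_2^2}}{2},\qquad \psi(u):=\frac{C_2\sqrt{u(C_1-u)}}{\pi\,[C_2^2+u(C_1-u)]}\ (0\le u\le C_1),\qquad r:=\frac{2C_2\sqrt{\xi_p(\xi_p-C_1)}}{2\xi_p-C_1}.$$ Then $\xi_p>C_1$, the measure $$dG(u)=\chi_{[0,C_1]}(u)\,\frac{\psi(u)}{u}\,du+\frac{r}{\xi_p}\,\delta_{\xi_p}$$ is a probability measure on $[0,\xi_p]$ (i.e. $\int_0^{C_1}\frac{\psi(u)}{u}du+\frac{r}{\xi_p}=1$), and for all real $\omega$ $$K^D(\omega)=\frac{\nu}{F}\int_0^{\xi_p}\frac{u\,dG(u)}{1-i\omega u}.$$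
   Context: $\chi_{[0,C_1]}$ is the indicator function of $[0,C_1]$, $du$ is Lebesgue measure and $\delta_{\xi_p}$ the Dirac measure at $\xi_p$. Physically $\phi$ is porosity, $\alpha_\infty$ infinite-frequency tortuosity, $K_0$ static permeability, $\eta$ dynamic viscosity, $\rho_f$ fluid density, $\Lambda$ the JKD length parameter. *)

theory Defs
  imports "HOL-Analysis.Analysis"
begin

definition JKD_perm :: "real \<Rightarrow> real \<Rightarrow> real \<Rightarrow> real \<Rightarrow> real \<Rightarrow> real \<Rightarrow> real \<Rightarrow> complex" where
  "JKD_perm phi ainf K0 eta rhof Lambda \<omega> =
     complex_of_real K0 /
      (csqrt (1 - \<i> * complex_of_real (4 * ainf\<^sup>2 * K0\<^sup>2 * rhof * \<omega> / (eta * Lambda\<^sup>2 * phi\<^sup>2)))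
       - \<i> * complex_of_real (ainf * K0 * rhof * \<omega> / (eta * phi)))"

end

theory Submission
  imports Defs
begin



lemma csqrt_Re_pos: assumes "0 < Re z" shows "0 < Re (csqrt z)"
proof (rule ccontr)
  assume "\<not> 0 < Re (csqrt z)"
  with Re_csqrt[of z] have h: "Re (csqrt z) = 0" by linarith
  have "Re z = Re ((csqrt z)\<^sup>2)" by simp
  also have "\<dots> = - ((Im (csqrt z))\<^sup>2)" using h by (simp add: power2_eq_square)
  finally show False using assms by (smt (verit) zero_le_power2)
qed

lemma alg1: fixes c s k g :: complex assumes cs: "c\<^sup>2 + s\<^sup>2 = 1" and kg: "k\<^sup>2 = 1 - g"
  and A: "c + \<i> * k * s \<noteq> 0" and B: "c - \<i> * k * s \<noteq> 0" and k: "k \<noteq> 0"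
shows "- ((inverse (c + \<i> * k * s) * (c * (\<i> * k) - s) - inverse (c - \<i> * k * s) * (- s - c * (\<i> * k))) * \<i> / (2 * k)) = 1 / (1 - g * s\<^sup>2)"
proof -
  have e: "1 - g * s\<^sup>2 = (c + \<i> * k * s) * (c - \<i> * k * s)"
  proof -
    have "(c + \<i> * k * s) * (c - \<i> * k * s) = c\<^sup>2 + k\<^sup>2 * s\<^sup>2" by (simp add: algebra_simps power2_eq_square)
    then show ?thesis using cs kg by (simp add: algebra_simps)
  qed
  have cc: "c * c = 1 - s * s" using cs by (simp add: power2_eq_square algebra_simps)
  have L: "- ((inverse (c + \<i> * k * s) * (c * (\<i> * k) - s) - inverse (c - \<i> * k * s) * (- s - c * (\<i> * k))) * \<i> / (2 * k))
     = (c\<^sup>2 + s\<^sup>2) / ((c + \<i> * k * s) * (c - \<i> * k * s))"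
  proof -
    have "(c + \<i> * k * s) * (c - \<i> * k * s) = c * c + k * (k * (s * s))" by (simp add: algebra_simps)
    then have W0: "c * c + k * (k * (s * s)) \<noteq> 0" using A B by (metis mult_eq_0_iff)
    have "c * (c * (k * 2)) + k * (k * (k * (s * (s * 2)))) = 2 * k * (c * c + k * (k * (s * s)))" by (simp add: algebra_simps)
    then have Y0: "c * (c * (k * 2)) + k * (k * (k * (s * (s * 2)))) \<noteq> 0" using W0 k by simp
    show ?thesis using A B k W0 Y0
      apply (simp add: field_simps)
      apply (simp add: field_simps W0 Y0)
      apply (simp add: algebra_simps power2_eq_square)
      done
  qed
  show ?thesis unfolding L e cs by simp
qed

lemma int_A:
  fixes \<gamma> :: complex
  assumes "Re \<gamma> < 1"
  shows "((\<lambda>\<phi>::real. 1 / (1 - \<gamma> * (complex_of_real (sin \<phi>))\<^sup>2)) has_integral (pi / (2 * csqrt (1 - \<gamma>)))) {0..pi/2}"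
proof -
  define k where "k = csqrt (1 - \<gamma>)"
  have kpos: "0 < Re k" unfolding k_def using assms by (intro csqrt_Re_pos) simp
  have k0: "k \<noteq> 0" using kpos by auto
  have k2: "k^2 = 1 - \<gamma>" unfolding k_def by simp
  define A where "A = (\<lambda>z. cos z + \<i> * k * sin z)"
  define B where "B = (\<lambda>z. cos z - \<i> * k * sin z)"
  define G where "G = (\<lambda>z. (- \<i> / 2) * (Ln (A z) - Ln (B z)) / k)"
  have Ar: "A (of_real x) = of_real (cos x) + \<i> * k * of_real (sin x)" for x
    by (simp add: A_def cos_of_real sin_of_real)
  have Br: "B (of_real x) = of_real (cos x) - \<i> * k * of_real (sin x)" for x
    by (simp add: B_def cos_of_real sin_of_real)
  have sc: "0 \<le> sin x \<and> 0 \<le> cos x \<and> (sin x = 0 \<longrightarrow> cos x = 1)" if "x \<in> {0..pi/2}" for x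
  proof -
    have "0 \<le> sin x" using that by (intro sin_ge_zero) auto
    moreover have "0 \<le> cos x" using that by (intro cos_ge_zero) auto
    moreover have "sin x = 0 \<longrightarrow> cos x = 1" using sin_cos_squared_add[of x] \<open>0 \<le> cos x\<close>
      by (smt (verit) power2_eq_1_iff zero_power2)
    ultimately show ?thesis by blast
  qed
  have Anr: "A (of_real x) \<notin> \<real>\<^sub>\<le>\<^sub>0" "B (of_real x) \<notin> \<real>\<^sub>\<le>\<^sub>0" if "x \<in> {0..pi/2}" for x
  proof -
    have "Im (A (of_real x)) = Re k * sin x" "Im (B (of_real x)) = - Re k * sin x"
      by (simp_all add: Ar Br)
    moreover have "Re (A (of_real x)) = cos x - Im k * sin x" "Re (B (of_real x)) = cos x + Im k * sin x"
      by (simp_all add: Ar Br)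
    ultimately show "A (of_real x) \<notin> \<real>\<^sub>\<le>\<^sub>0" "B (of_real x) \<notin> \<real>\<^sub>\<le>\<^sub>0"
      using sc[OF that] kpos
      by (auto simp: complex_nonpos_Reals_iff)
  qed
  have deriv: "(G has_field_derivative 1 / (1 - \<gamma> * (complex_of_real (sin x))\<^sup>2)) (at (of_real x))"
    if "x \<in> {0..pi/2}" for x
  proof -
    have nA: "cos (of_real x) + \<i> * k * sin (of_real x) \<notin> \<real>\<^sub>\<le>\<^sub>0"
     and nB: "cos (of_real x) - \<i> * k * sin (of_real x) \<notin> \<real>\<^sub>\<le>\<^sub>0"
      using Anr[OF that] by (simp_all add: A_def B_def)
    have A0: "cos (of_real x) + \<i> * k * sin (of_real x) \<noteq> 0" using nA by auto
    have B0: "cos (of_real x) - \<i> * k * sin (of_real x) \<noteq> 0" using nB by auto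
    have cs: "(cos (complex_of_real x))\<^sup>2 + (sin (complex_of_real x))\<^sup>2 = 1" 
      by (simp add: sin_squared_eq)
    show ?thesis
      unfolding G_def A_def B_def
      apply (rule derivative_eq_intros has_field_derivative_Ln[THEN DERIV_chain2] refl nA nB)+
      using k0 A0 B0 apply (simp_all add: sin_of_real)
      apply (rule alg1)
      using cs k2 k0 A0 B0 by (simp_all add: sin_of_real)
  qed
  have "((\<lambda>\<phi>::real. 1 / (1 - \<gamma> * (complex_of_real (sin \<phi>))\<^sup>2)) has_integral (G (of_real (pi/2)) - G (of_real 0))) {0..pi/2}"
    apply (rule fundamental_theorem_of_calculus)
     apply simp
    apply (rule has_vector_derivative_real_field)
    apply (rule deriv)
    apply simp
    done
  moreover have "G (of_real 0) = 0" by (simp add: G_def A_def B_def)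
  moreover have "G (of_real (pi/2)) = pi / (2 * k)"
  proof -
    have a: "A (of_real (pi/2)) = \<i> * k" using Ar[of "pi/2"] by simp
    have b: "B (of_real (pi/2)) = - (\<i> * k)" using Br[of "pi/2"] by simp
    have "Ln (- (\<i> * k)) = Ln (\<i> * k) - \<i> * pi"
      using Ln_minus[of "\<i> * k"] kpos k0 by simp
    then have h: "Ln (\<i> * k) = Ln (- (\<i> * k)) + \<i> * pi" by simp
    show ?thesis unfolding G_def a b h using k0 by (simp add: field_simps)
  qed
  ultimately show ?thesis by (simp add: k_def)
qed

lemma L1: fixes x p q :: "'a::field"
  assumes "1 - (1 - p) * x \<noteq> 0" "1 - (1 - q) * x \<noteq> 0" "p \<noteq> q"
  shows "x / ((1 - (1 - p) * x) * (1 - (1 - q) * x)) = (1 / (1 - (1 - q) * x) - 1 / (1 - (1 - p) * x)) / (p - q)"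
proof -
  define dp where "dp = 1 - (1 - p) * x"
  define dq where "dq = 1 - (1 - q) * x"
  have e: "dp - dq = (p - q) * x" by (simp add: dp_def dq_def algebra_simps)
  have nz: "dp \<noteq> 0" "dq \<noteq> 0" "p - q \<noteq> 0" using assms by (simp_all add: dp_def dq_def)
  have "(1 / dq - 1 / dp) / (p - q) = ((dp - dq) / (dp * dq)) / (p - q)" using nz by (simp add: field_simps)
  also have "\<dots> = x / (dp * dq)" unfolding e using nz by simp
  finally show ?thesis by (simp add: dp_def dq_def)
qed

lemma L2: fixes x p q :: "'a::field"
  assumes "1 - (1 - p) * x \<noteq> 0" "1 - (1 - q) * x \<noteq> 0" "p \<noteq> q"
  shows "(1 - x) / ((1 - (1 - p) * x) * (1 - (1 - q) * x)) = (q / (1 - (1 - q) * x) - p / (1 - (1 - p) * x)) / (q - p)"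
proof -
  define dp where "dp = 1 - (1 - p) * x"
  define dq where "dq = 1 - (1 - q) * x"
  have e: "q * dp - p * dq = (q - p) * (1 - x)" by (simp add: dp_def dq_def algebra_simps)
  have nz: "dp \<noteq> 0" "dq \<noteq> 0" "q - p \<noteq> 0" using assms by (simp_all add: dp_def dq_def)
  have "(q / dq - p / dp) / (q - p) = ((q * dp - p * dq) / (dp * dq)) / (q - p)" using nz by (simp add: field_simps)
  also have "\<dots> = (1 - x) / (dp * dq)" unfolding e using nz by simp
  finally show ?thesis by (simp add: dp_def dq_def)
qed

lemma pf3': fixes x p1 p2 p3 :: "'a::field"
  assumes "p1 \<noteq> p2" "p1 \<noteq> p3" "p2 \<noteq> p3"
    and d: "1 - (1 - p1) * x \<noteq> 0" "1 - (1 - p2) * x \<noteq> 0" "1 - (1 - p3) * x \<noteq> 0"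
  shows "x * (1 - x) / ((1 - (1 - p1) * x) * (1 - (1 - p2) * x) * (1 - (1 - p3) * x))
    = (1 / (p1 - p2)) * ((p3 / (1 - (1 - p3) * x) - p2 / (1 - (1 - p2) * x)) / (p3 - p2)
                       - (p3 / (1 - (1 - p3) * x) - p1 / (1 - (1 - p1) * x)) / (p3 - p1))"
proof -
  define d1 where "d1 = 1 - (1 - p1) * x"
  define d2 where "d2 = 1 - (1 - p2) * x"
  define d3 where "d3 = 1 - (1 - p3) * x"
  have nz: "d1 \<noteq> 0" "d2 \<noteq> 0" "d3 \<noteq> 0" using d by (simp_all add: d1_def d2_def d3_def)
  have "x * (1 - x) / (d1 * d2 * d3) = (1 - x) / d3 * (x / (d1 * d2))" by (simp add: ac_simps)
  also have "x / (d1 * d2) = (1 / d2 - 1 / d1) / (p1 - p2)"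
    unfolding d1_def d2_def by (rule L1) (use assms in auto)
  also have "(1 - x) / d3 * ((1 / d2 - 1 / d1) / (p1 - p2)) = (1 / (p1 - p2)) * ((1 - x) / (d2 * d3) - (1 - x) / (d1 * d3))"
  proof -
    have "p1 - p2 \<noteq> 0" using assms by simp
    then show ?thesis using nz by (simp add: field_simps)
  qed
  also have "(1 - x) / (d2 * d3) = (p3 / d3 - p2 / d2) / (p3 - p2)"
    unfolding d2_def d3_def by (rule L2) (use assms in auto)
  also have "(1 - x) / (d1 * d3) = (p3 / d3 - p1 / d1) / (p3 - p1)"
    unfolding d1_def d3_def by (rule L2) (use assms in auto)
  finally show ?thesis by (simp add: d1_def d2_def d3_def)
qed

lemma sumk': fixes k1 k2 k3 :: complex
  assumes "k1 + k2 \<noteq> 0" "k1 + k3 \<noteq> 0" "k2 + k3 \<noteq> 0" "k1 \<noteq> k2" "k1 \<noteq> k3" "k2 \<noteq> k3"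
  shows "(1 / (k1\<^sup>2 - k2\<^sup>2)) * ((k3 - k2) / (k3\<^sup>2 - k2\<^sup>2) - (k3 - k1) / (k3\<^sup>2 - k1\<^sup>2))
     = 1 / ((k1 + k2) * (k1 + k3) * (k2 + k3))"
proof -
  have sq: "\<And>a b::complex. b\<^sup>2 - a\<^sup>2 = (b - a) * (b + a)" by (simp add: algebra_simps power2_eq_square)
  have m: "k1 - k2 \<noteq> 0" "k3 - k2 \<noteq> 0" "k3 - k1 \<noteq> 0" "k3 + k2 \<noteq> 0" "k3 + k1 \<noteq> 0"
    using assms by (auto simp: add.commute)
  have a: "(k3 - k2) / ((k3 - k2) * (k3 + k2)) = 1 / (k3 + k2)" using m by simp
  have b: "(k3 - k1) / ((k3 - k1) * (k3 + k1)) = 1 / (k3 + k1)" using m by simp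
  have c: "1 / (k3 + k2) - 1 / (k3 + k1) = (k1 - k2) / ((k3 + k2) * (k3 + k1))"
    using m by (simp add: field_simps)
  have d: "1 / ((k1 - k2) * (k1 + k2)) * ((k1 - k2) / ((k3 + k2) * (k3 + k1))) = 1 / ((k1 + k2) * (k3 + k2) * (k3 + k1))"
    using m by simp
  show ?thesis unfolding sq a b c d using assms by (simp add: add.commute mult.commute mult.left_commute)
qed

lemma sum2': fixes a b :: real
  assumes "0 < a" "0 < b" "a \<noteq> b"
  shows "(b\<^sup>2 * (1 / b) - a\<^sup>2 * (1 / a)) / (b\<^sup>2 - a\<^sup>2) = 1 / (a + b)"
proof -
  have "b\<^sup>2 * (1 / b) - a\<^sup>2 * (1 / a) = b - a" using assms by (simp add: power2_eq_square)
  moreover have "b\<^sup>2 - a\<^sup>2 = (b - a) * (a + b)" by (simp add: algebra_simps power2_eq_square)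
  ultimately show ?thesis using assms by simp
qed

lemma final_alg: fixes p c k t :: complex
  assumes c0: "c \<noteq> 0" and p0: "p \<noteq> 0" and D0: "p\<^sup>2 - c\<^sup>2 \<noteq> 0" and E0: "p\<^sup>2 + c\<^sup>2 \<noteq> 0"
    and tk: "t * (p\<^sup>2 - c\<^sup>2) = p * (1 - k\<^sup>2)"
    and A0: "c * k + p \<noteq> 0" and B0: "p * k - c \<noteq> 0" and C0: "p * k + c \<noteq> 0"
  shows "1 / (k - c * t) = (1 / c) * (((p\<^sup>2 - c\<^sup>2) / p)\<^sup>2 / c / ((c / p + p / c) * (c / p + k) * (p / c + k))
             + (2 * c\<^sup>2 * p / (p\<^sup>2 + c\<^sup>2)) / (1 - t * p))"
proof -
  define D where "D = p\<^sup>2 - c\<^sup>2"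
  define E where "E = p\<^sup>2 + c\<^sup>2"
  define A where "A = c * k + p"
  define B where "B = p * k - c"
  define C where "C = p * k + c"
  have t: "t = p * (1 - k\<^sup>2) / D" using tk D0 unfolding D_def by (simp add: field_simps)
  have h1: "k - c * t = A * B / D" unfolding t A_def B_def D_def using D0
    by (simp add: field_simps) (simp add: algebra_simps power2_eq_square)
  have h2: "1 - t * p = B * C / D" unfolding t C_def B_def D_def using D0
    by (simp add: field_simps) (simp add: algebra_simps power2_eq_square)
  have h3: "(c / p + p / c) * (c / p + k) * (p / c + k) = E * C * A / (c\<^sup>2 * p\<^sup>2)"
    unfolding E_def C_def A_def using c0 p0
    by (simp add: field_simps) (simp add: algebra_simps power2_eq_square)
  have key: "D * B + 2 * c * p * A = E * C" unfolding D_def B_def A_def E_def C_def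
    by (simp add: algebra_simps power2_eq_square)
  have nz: "A \<noteq> 0" "B \<noteq> 0" "C \<noteq> 0" "D \<noteq> 0" "E \<noteq> 0"
    using A0 B0 C0 D0 E0 by (simp_all add: A_def B_def C_def D_def E_def)
  show ?thesis unfolding h1 h2 h3 unfolding D_def[symmetric] E_def[symmetric]
  proof -
    have "1 / (A * B / D) = D / (A * B)" by simp
    also have "\<dots> = (1 / c) * ((D / p)\<^sup>2 / c / (E * C * A / (c\<^sup>2 * p\<^sup>2)) + 2 * c\<^sup>2 * p / E / (B * C / D))"
    proof -
      have "(1 / c) * ((D / p)\<^sup>2 / c / (E * C * A / (c\<^sup>2 * p\<^sup>2)) + 2 * c\<^sup>2 * p / E / (B * C / D))
          = D * (D * B + 2 * c * p * A) / (E * C * A * B)"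
        using nz c0 p0 by (simp add: field_simps) (simp add: algebra_simps power2_eq_square)
      also have "\<dots> = D / (A * B)" unfolding key using nz by (simp add: field_simps)
      finally show ?thesis by simp
    qed
    finally show "1 / (A * B / D) = 1 / c * ((D / p)\<^sup>2 / c / (E * C * A / (c\<^sup>2 * p\<^sup>2)) + 2 * c\<^sup>2 * p / E / (B * C / D))" .
  qed
qed
lemma int_A_real:
  fixes \<gamma> :: real
  assumes "\<gamma> < 1"
  shows "((\<lambda>\<phi>::real. 1 / (1 - \<gamma> * (sin \<phi>)\<^sup>2)) has_integral (pi / (2 * sqrt (1 - \<gamma>)))) {0..pi/2}"
proof -
  have "((\<lambda>\<phi>::real. 1 / (1 - complex_of_real \<gamma> * (complex_of_real (sin \<phi>))\<^sup>2)) has_integral (pi / (2 * csqrt (1 - complex_of_real \<gamma>)))) {0..pi/2}"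
    using assms by (intro int_A) simp
  from has_integral_Re[OF this] have "((\<lambda>\<phi>::real. Re (1 / (1 - complex_of_real \<gamma> * (complex_of_real (sin \<phi>))\<^sup>2))) has_integral
     Re (pi / (2 * csqrt (1 - complex_of_real \<gamma>)))) {0..pi/2}" .
  moreover have "\<And>\<phi>. Re (1 / (1 - complex_of_real \<gamma> * (complex_of_real (sin \<phi>))\<^sup>2)) = 1 / (1 - \<gamma> * (sin \<phi>)\<^sup>2)"
  proof -
    fix \<phi>
    have "1 / (1 - complex_of_real \<gamma> * (complex_of_real (sin \<phi>))\<^sup>2) = complex_of_real (1 / (1 - \<gamma> * (sin \<phi>)\<^sup>2))"
      by simp
    then show "Re (1 / (1 - complex_of_real \<gamma> * (complex_of_real (sin \<phi>))\<^sup>2)) = 1 / (1 - \<gamma> * (sin \<phi>)\<^sup>2)"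
      by (metis Re_complex_of_real)
  qed
  moreover have "Re (pi / (2 * csqrt (1 - complex_of_real \<gamma>))) = pi / (2 * sqrt (1 - \<gamma>))"
  proof -
    have "csqrt (1 - complex_of_real \<gamma>) = complex_of_real (sqrt (1 - \<gamma>))"
      using assms of_real_sqrt[of "1 - \<gamma>"] by simp
    then have "pi / (2 * csqrt (1 - complex_of_real \<gamma>)) = complex_of_real (pi / (2 * sqrt (1 - \<gamma>)))" by simp
    then show ?thesis by (metis Re_complex_of_real)
  qed
  ultimately show ?thesis by simp
qed



theorem mainTheorem1:
  fixes phi ainf K0 eta rhof Lambda :: real
  assumes "0 < phi" "phi < 1" "0 < ainf" "0 < K0" "0 < eta" "0 < rhof" "0 < Lambda"
  defines "\<nu> \<equiv> eta / rhof"
      and "F \<equiv> ainf / phi"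
  defines "C2 \<equiv> F * K0 / \<nu>"
  defines "C1 \<equiv> 4 * C2 * F * K0 / Lambda\<^sup>2"
  defines "\<xi>p \<equiv> (C1 + sqrt (C1\<^sup>2 + 4 * C2\<^sup>2)) / 2"
      and "\<psi> \<equiv> (\<lambda>u::real. C2 * sqrt (u * (C1 - u)) / (pi * (C2\<^sup>2 + u * (C1 - u))))"
  defines "r \<equiv> 2 * C2 * sqrt (\<xi>p * (\<xi>p - C1)) / (2 * \<xi>p - C1)"
  shows "\<xi>p > C1
     \<and> 0 \<le> r
     \<and> (\<forall>u\<in>{0..C1}. 0 \<le> \<psi> u)
     \<and> set_integrable lborel {0..C1} (\<lambda>u. \<psi> u / u)
     \<and> (LINT u:{0..C1}|lborel. \<psi> u / u) + r / \<xi>p = 1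
     \<and> (\<forall>\<omega>::real. JKD_perm phi ainf K0 eta rhof Lambda \<omega> =
          complex_of_real (\<nu> / F) *
            ((LINT u:{0..C1}|lborel.
                complex_of_real (u * (\<psi> u / u)) / (1 - \<i> * complex_of_real (\<omega> * u)))
             + complex_of_real (\<xi>p * (r / \<xi>p)) / (1 - \<i> * complex_of_real (\<omega> * \<xi>p))))"
proof -
  have nupos: "0 < \<nu>" and Fpos: "0 < F" using assms by (simp_all add: \<nu>_def F_def)
  have C2pos: "0 < C2" unfolding C2_def using nupos Fpos assms by simp
  have C1pos: "0 < C1" unfolding C1_def using C2pos Fpos assms by simp
  define S where "S = sqrt (C1\<^sup>2 + 4 * C2\<^sup>2)"
  have S2: "S\<^sup>2 = C1\<^sup>2 + 4 * C2\<^sup>2" unfolding S_def by simp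
  have SC1: "C1 < S" unfolding S_def using C2pos C1pos by (intro real_less_rsqrt) simp
  have Spos: "0 < S" using SC1 C1pos by simp
  have xi: "\<xi>p = (C1 + S) / 2" unfolding \<xi>p_def S_def by simp
  have xgt: "C1 < \<xi>p" using xi SC1 by simp
  have xpos: "0 < \<xi>p" using xgt C1pos by simp
  have prod: "\<xi>p * (\<xi>p - C1) = C2\<^sup>2"
  proof -
    have "\<xi>p * (\<xi>p - C1) = (S\<^sup>2 - C1\<^sup>2) / 4" unfolding xi by (simp add: field_simps power2_eq_square)
    then show ?thesis using S2 by simp
  qed
  have C1x: "C1 = (\<xi>p\<^sup>2 - C2\<^sup>2) / \<xi>p" using prod xpos by (simp add: field_simps power2_eq_square)
  have sqp: "sqrt (\<xi>p * (\<xi>p - C1)) = C2" using prod C2pos by simp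
  have Sx: "2 * \<xi>p - C1 = S" using xi by simp
  have r_eq: "r = 2 * C2\<^sup>2 / S" unfolding r_def sqp Sx by (simp add: power2_eq_square)
  have r0: "0 \<le> r" using r_eq Spos by simp
  have Sx2: "S = (\<xi>p\<^sup>2 + C2\<^sup>2) / \<xi>p"
  proof -
    have e1: "S * \<xi>p = 2 * (\<xi>p * \<xi>p) - C1 * \<xi>p" unfolding Sx[symmetric] by (simp add: algebra_simps)
    have e2: "\<xi>p * \<xi>p = C1 * \<xi>p + C2 * C2" using prod by (simp add: algebra_simps power2_eq_square)
    have "S * \<xi>p = \<xi>p\<^sup>2 + C2\<^sup>2" using e1 e2 by (simp add: power2_eq_square)
    then show ?thesis using xpos by (simp add: field_simps)
  qed
  have den_pos: "0 < C2\<^sup>2 + u * (C1 - u)" if "u \<in> {0..C1}" for u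
    using that C2pos by (simp add: add_pos_nonneg)
  have psi_nn: "\<forall>u\<in>{0..C1}. 0 \<le> \<psi> u"
  proof
    fix u assume u: "u \<in> {0..C1}"
    then show "0 \<le> \<psi> u" unfolding \<psi>_def using den_pos[OF u] C2pos
      by (intro divide_nonneg_pos mult_nonneg_nonneg) auto
  qed
  define a where "a = C2 / \<xi>p"
  define b where "b = \<xi>p / C2"
  have apos: "0 < a" and bpos: "0 < b" using C2pos xpos by (simp_all add: a_def b_def)
  have ba: "b - a = C1 / C2" unfolding a_def b_def C1x using C2pos xpos
    by (simp add: field_simps power2_eq_square)
  have aneb: "a \<noteq> b" using ba C1pos C2pos by auto
  have ab1: "a * b = 1" unfolding a_def b_def using C2pos xpos by simp
  have asq: "a\<^sup>2 \<noteq> 1"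
  proof
    assume "a\<^sup>2 = 1" then have "a = 1" using apos by (simp add: power2_eq_1_iff)
    then show False using ab1 aneb by simp
  qed
  have bsq: "b\<^sup>2 \<noteq> 1"
  proof
    assume "b\<^sup>2 = 1" then have "b = 1" using bpos by (simp add: power2_eq_1_iff)
    then show False using ab1 aneb by simp
  qed
  have apb: "a + b = S / C2" unfolding a_def b_def Sx2 using C2pos xpos
    by (simp add: field_simps power2_eq_square)
  have Q: "C2\<^sup>2 + C1 * x * (C1 - C1 * x) = C2\<^sup>2 * ((1 - (1 - a\<^sup>2) * x) * (1 - (1 - b\<^sup>2) * x))" for x
    unfolding a_def b_def C1x using C2pos xpos
    by (simp add: field_simps power2_eq_square)
  have dpos: "0 < 1 - (1 - y\<^sup>2) * x" if "0 < y" "x \<in> {0..1}" for x y :: real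
  proof (cases "x = 1")
    case True then show ?thesis using that(1) by (simp add: power2_eq_square)
  next
    case False
    then have "0 < 1 - x" using that by simp
    moreover have "0 \<le> y\<^sup>2 * x" using that by simp
    ultimately show ?thesis by (simp add: algebra_simps)
  qed
  define g where "g = (\<lambda>\<phi>::real. C1 * (sin \<phi>)\<^sup>2)"
  define g' where "g' = (\<lambda>\<phi>::real. 2 * C1 * sin \<phi> * cos \<phi>)"
  have gder: "(g has_real_derivative g' \<phi>) (at \<phi>)" for \<phi>
    unfolding g_def g'_def by (auto intro!: derivative_eq_intros simp: power2_eq_square)
  have sc: "0 \<le> sin \<phi>" "0 \<le> cos \<phi>" "(cos \<phi>)\<^sup>2 = 1 - (sin \<phi>)\<^sup>2" "(sin \<phi>)\<^sup>2 \<in> {0..1}"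
    if "\<phi> \<in> {0..pi/2}" for \<phi>
  proof -
    show "0 \<le> sin \<phi>" using that by (intro sin_ge_zero) auto
    show "0 \<le> cos \<phi>" using that by (intro cos_ge_zero) auto
    show "(cos \<phi>)\<^sup>2 = 1 - (sin \<phi>)\<^sup>2" by (simp add: cos_squared_eq)
    show "(sin \<phi>)\<^sup>2 \<in> {0..1}" unfolding atLeastAtMost_iff using sin_cos_squared_add[of \<phi>] zero_le_power2[of "sin \<phi>"] zero_le_power2[of "cos \<phi>"] by linarith
  qed
  have psig: "\<psi> (g \<phi>) = C2 * (C1 * sin \<phi> * cos \<phi>) / (pi * (C2\<^sup>2 * ((1 - (1 - a\<^sup>2) * (sin \<phi>)\<^sup>2) * (1 - (1 - b\<^sup>2) * (sin \<phi>)\<^sup>2))))"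
    if "\<phi> \<in> {0..pi/2}" for \<phi>
  proof -
    have "g \<phi> * (C1 - g \<phi>) = (C1 * sin \<phi> * cos \<phi>)\<^sup>2"
      unfolding g_def power_mult_distrib sc(3)[OF that] by (simp add: algebra_simps power2_eq_square)
    moreover have "0 \<le> C1 * sin \<phi> * cos \<phi>" using sc[OF that] C1pos by simp
    ultimately have "sqrt (g \<phi> * (C1 - g \<phi>)) = C1 * sin \<phi> * cos \<phi>" by simp
    moreover have "C2\<^sup>2 + g \<phi> * (C1 - g \<phi>) = C2\<^sup>2 * ((1 - (1 - a\<^sup>2) * (sin \<phi>)\<^sup>2) * (1 - (1 - b\<^sup>2) * (sin \<phi>)\<^sup>2))"
      unfolding g_def using Q[of "(sin \<phi>)\<^sup>2"] by (simp add: mult.assoc)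
    ultimately show ?thesis unfolding \<psi>_def by simp
  qed
  define K where "K = 2 * C1\<^sup>2 / (pi * C2)"
  have Rmain: "g' \<phi> * \<psi> (g \<phi>) = K * ((sin \<phi>)\<^sup>2 * (1 - (sin \<phi>)\<^sup>2) / ((1 - (1 - a\<^sup>2) * (sin \<phi>)\<^sup>2) * (1 - (1 - b\<^sup>2) * (sin \<phi>)\<^sup>2)))"
    if "\<phi> \<in> {0..pi/2}" for \<phi>
  proof -
    have d: "0 < 1 - (1 - a\<^sup>2) * (sin \<phi>)\<^sup>2" "0 < 1 - (1 - b\<^sup>2) * (sin \<phi>)\<^sup>2"
      using dpos apos bpos sc(4)[OF that] by auto
    have gen: "2 * C1 * s * c * (C2 * (C1 * s * c) / (pi * (C2\<^sup>2 * (D1 * D2))))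
       = 2 * C1\<^sup>2 / (pi * C2) * (s\<^sup>2 * (1 - s\<^sup>2) / (D1 * D2))"
      if "D1 \<noteq> 0" "D2 \<noteq> 0" "c\<^sup>2 = 1 - s\<^sup>2" for s c D1 D2 :: real
    proof -
      have "2 * C1 * s * c * (C2 * (C1 * s * c) / (pi * (C2\<^sup>2 * (D1 * D2))))
          = 2 * C1\<^sup>2 * C2 * (s\<^sup>2 * c\<^sup>2) / (pi * (C2\<^sup>2 * (D1 * D2)))"
        by (simp add: power2_eq_square algebra_simps)
      also have "\<dots> = 2 * C1\<^sup>2 / (pi * C2) * (s\<^sup>2 * (1 - s\<^sup>2) / (D1 * D2))"
        unfolding that(3) using that(1,2) C2pos by (simp add: field_simps power2_eq_square)
      finally show ?thesis .
    qed
    show ?thesis unfolding psig[OF that] g'_def K_def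
      by (rule gen) (use d sc(3)[OF that] in auto)
  qed
  define K2 where "K2 = 2 * C1 / (pi * C2)"
  have Rpsi: "\<psi> (g \<phi>) / g \<phi> * g' \<phi> = K2 * ((1 - (sin \<phi>)\<^sup>2) / ((1 - (1 - a\<^sup>2) * (sin \<phi>)\<^sup>2) * (1 - (1 - b\<^sup>2) * (sin \<phi>)\<^sup>2)))"
    if "\<phi> \<in> {0..pi/2}" "0 < sin \<phi>" for \<phi>
  proof -
    have d: "0 < 1 - (1 - a\<^sup>2) * (sin \<phi>)\<^sup>2" "0 < 1 - (1 - b\<^sup>2) * (sin \<phi>)\<^sup>2"
      using dpos apos bpos sc(4)[OF that(1)] by auto
    have gen: "C2 * (C1 * s * c) / (pi * (C2\<^sup>2 * (D1 * D2))) / (C1 * s\<^sup>2) * (2 * C1 * s * c)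
       = 2 * C1 / (pi * C2) * ((1 - s\<^sup>2) / (D1 * D2))"
      if "D1 \<noteq> 0" "D2 \<noteq> 0" "c\<^sup>2 = 1 - s\<^sup>2" "s \<noteq> 0" for s c D1 D2 :: real
    proof -
      have "C2 * (C1 * s * c) / (pi * (C2\<^sup>2 * (D1 * D2))) / (C1 * s\<^sup>2) * (2 * C1 * s * c)
          = 2 * C1 * C2 * c\<^sup>2 / (pi * (C2\<^sup>2 * (D1 * D2)))"
        using that(4) C1pos by (simp add: power2_eq_square field_simps)
      also have "\<dots> = 2 * C1 / (pi * C2) * ((1 - s\<^sup>2) / (D1 * D2))"
        unfolding that(3) using that(1,2) C2pos by (simp add: field_simps power2_eq_square)
      finally show ?thesis .
    qed
    show ?thesis unfolding psig[OF that(1)] unfolding g'_def K2_def g_def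
      by (rule gen) (use d sc(3)[OF that(1)] that(2) in auto)
  qed
  define f2 where "f2 = (\<lambda>u. \<psi> u / u)"
  define h2 where "h2 = (\<lambda>\<phi>::real. K2 * ((1 - (sin \<phi>)\<^sup>2) / ((1 - (1 - a\<^sup>2) * (sin \<phi>)\<^sup>2) * (1 - (1 - b\<^sup>2) * (sin \<phi>)\<^sup>2))))"
  have h2_int: "(h2 has_integral C1 / S) {0..pi/2}"
  proof -
    have i1: "((\<lambda>\<phi>::real. 1 / (1 - (1 - a\<^sup>2) * (sin \<phi>)\<^sup>2)) has_integral (pi / (2 * a))) {0..pi/2}"
      using int_A_real[of "1 - a\<^sup>2"] apos by simp
    have i2: "((\<lambda>\<phi>::real. 1 / (1 - (1 - b\<^sup>2) * (sin \<phi>)\<^sup>2)) has_integral (pi / (2 * b))) {0..pi/2}"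
      using int_A_real[of "1 - b\<^sup>2"] bpos by simp
    have hi: "((\<lambda>\<phi>. K2 * ((b\<^sup>2 * (1 / (1 - (1 - b\<^sup>2) * (sin \<phi>)\<^sup>2)) - a\<^sup>2 * (1 / (1 - (1 - a\<^sup>2) * (sin \<phi>)\<^sup>2))) / (b\<^sup>2 - a\<^sup>2)))
        has_integral K2 * ((b\<^sup>2 * (pi / (2 * b)) - a\<^sup>2 * (pi / (2 * a))) / (b\<^sup>2 - a\<^sup>2))) {0..pi/2}"
      by (intro has_integral_mult_right has_integral_divide has_integral_diff i1 i2)
    have hv: "K2 * ((b\<^sup>2 * (pi / (2 * b)) - a\<^sup>2 * (pi / (2 * a))) / (b\<^sup>2 - a\<^sup>2)) = C1 / S"
    proof -
      have "(b\<^sup>2 * (pi / (2 * b)) - a\<^sup>2 * (pi / (2 * a))) / (b\<^sup>2 - a\<^sup>2)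
          = (pi / 2) * ((b\<^sup>2 * (1 / b) - a\<^sup>2 * (1 / a)) / (b\<^sup>2 - a\<^sup>2))"
        by (simp add: diff_divide_distrib right_diff_distrib ac_simps)
      also have "\<dots> = (pi / 2) * (1 / (a + b))" using sum2'[OF apos bpos aneb] by simp
      finally show ?thesis unfolding K2_def apb using C2pos Spos by simp
    qed
    have heq: "K2 * ((b\<^sup>2 * (1 / (1 - (1 - b\<^sup>2) * (sin \<phi>)\<^sup>2)) - a\<^sup>2 * (1 / (1 - (1 - a\<^sup>2) * (sin \<phi>)\<^sup>2))) / (b\<^sup>2 - a\<^sup>2)) = h2 \<phi>"
      if "\<phi> \<in> {0..pi/2}" for \<phi>
    proof -
      have d: "1 - (1 - a\<^sup>2) * (sin \<phi>)\<^sup>2 \<noteq> 0" "1 - (1 - b\<^sup>2) * (sin \<phi>)\<^sup>2 \<noteq> 0"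
        using dpos[of a "(sin \<phi>)\<^sup>2"] dpos[of b "(sin \<phi>)\<^sup>2"] apos bpos sc(4)[OF that] by auto
      have "a\<^sup>2 \<noteq> b\<^sup>2" using apos bpos aneb by (simp add: power2_eq_iff_nonneg)
      from L2[OF d this] show ?thesis unfolding h2_def by simp
    qed
    from has_integral_eq[OF heq hi] show ?thesis unfolding hv .
  qed
  have f2_nn: "0 \<le> f2 u" if "u \<in> {0..C1}" for u
    unfolding f2_def using psi_nn that by simp
  have f2_meas: "set_borel_measurable borel {0..C1} f2"
    unfolding set_borel_measurable_def f2_def \<psi>_def by measurable
  have sub: "(\<integral>\<^sup>+x. f2 x * indicator {g 0..g (pi/2)} x \<partial>lborel) =
             (\<integral>\<^sup>+x. f2 (g x) * g' x * indicator {0..pi/2} x \<partial>lborel)"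
  proof (rule nn_integral_substitution)
    show "set_borel_measurable borel {g 0..g (pi/2)} f2" using f2_meas by (simp add: g_def)
    show "(g has_real_derivative g' x) (at x)" for x by (rule gder)
    show "continuous_on {0..pi/2} g'" unfolding g'_def by (intro continuous_intros)
    show "0 \<le> g' x" if "x \<in> {0..pi/2}" for x unfolding g'_def using sc[OF that] C1pos by simp
  qed simp
  have g0: "g 0 = 0" and gpi: "g (pi/2) = C1" by (simp_all add: g_def)
  have nn2: "(\<integral>\<^sup>+x. ennreal (h2 x) * indicator {0..pi/2} x \<partial>lborel) = ennreal (C1 / S)"
  proof (rule nn_integral_has_integral_lebesgue'[OF _ h2_int])
    fix x assume x: "x \<in> {0..pi/2}"
    have "0 < 1 - (1 - a\<^sup>2) * (sin x)\<^sup>2" "0 < 1 - (1 - b\<^sup>2) * (sin x)\<^sup>2"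
      using dpos apos bpos sc(4)[OF x] by auto
    moreover have "0 \<le> 1 - (sin x)\<^sup>2" using sc(4)[OF x] by simp
    moreover have "0 \<le> K2" unfolding K2_def using C1pos C2pos by simp
    ultimately show "0 \<le> h2 x" unfolding h2_def by simp
  qed
  have nn1: "(\<integral>\<^sup>+x. ennreal (f2 x) * indicator {0..C1} x \<partial>lborel) = ennreal (C1 / S)"
  proof -
    have "(\<integral>\<^sup>+x. ennreal (f2 x) * indicator {0..C1} x \<partial>lborel) = (\<integral>\<^sup>+x. f2 x * indicator {g 0..g (pi/2)} x \<partial>lborel)"
      unfolding g0 gpi by (intro nn_integral_cong) (auto split: split_indicator)
    also have "\<dots> = (\<integral>\<^sup>+x. f2 (g x) * g' x * indicator {0..pi/2} x \<partial>lborel)" by (rule sub)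
    also have "\<dots> = (\<integral>\<^sup>+x. ennreal (h2 x) * indicator {0..pi/2} x \<partial>lborel)"
    proof (rule nn_integral_cong_AE)
      show "AE x in lborel. ennreal (f2 (g x) * g' x * indicator {0..pi/2} x) = ennreal (h2 x) * indicator {0..pi/2} x"
        using AE_lborel_singleton[of 0]
      proof eventually_elim
        case (elim x)
        show ?case
        proof (cases "x \<in> {0..pi/2}")
          case True
          have "0 < sin x" using True elim by (intro sin_gt_zero) (auto simp: less_eq_real_def)
          then have "f2 (g x) * g' x = h2 x" unfolding f2_def h2_def using Rpsi[OF True] by simp
          then show ?thesis using True by simp
        next
          case False then show ?thesis by simp
        qed
      qed
    qed
    also have "\<dots> = ennreal (C1 / S)" by (rule nn2)
    finally show ?thesis .
  qed
  have int_f2: "set_integrable lborel {0..C1} (\<lambda>u. \<psi> u / u)"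
  proof -
    have "integrable lborel (\<lambda>x. indicator {0..C1} x *\<^sub>R f2 x)"
    proof (rule integrableI_nn_integral_finite)
      show "(\<lambda>x. indicator {0..C1} x *\<^sub>R f2 x) \<in> borel_measurable lborel"
        using f2_meas unfolding set_borel_measurable_def by simp
      show "AE x in lborel. 0 \<le> indicator {0..C1} x *\<^sub>R f2 x"
        using f2_nn by (auto split: split_indicator)
      show "(\<integral>\<^sup>+x. ennreal (indicator {0..C1} x *\<^sub>R f2 x) \<partial>lborel) = ennreal (C1 / S)"
        unfolding nn1[symmetric] by (intro nn_integral_cong) (auto split: split_indicator)
    qed
    then show ?thesis unfolding set_integrable_def f2_def .
  qed
  have val_f2: "(LINT u:{0..C1}|lborel. \<psi> u / u) = C1 / S"
  proof -
    have ii: "integrable lborel (\<lambda>x. indicator {0..C1} x *\<^sub>R f2 x)"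
      using int_f2 unfolding set_integrable_def f2_def .
    have "ennreal (LINT u:{0..C1}|lborel. \<psi> u / u) = (\<integral>\<^sup>+x. ennreal (indicator {0..C1} x *\<^sub>R f2 x) \<partial>lborel)"
      unfolding set_lebesgue_integral_def f2_def
      by (rule nn_integral_eq_integral[symmetric]) (use ii f2_nn in \<open>auto simp: f2_def split: split_indicator\<close>)
    also have "\<dots> = ennreal (C1 / S)"
      unfolding nn1[symmetric] by (intro nn_integral_cong) (auto split: split_indicator)
    finally have "ennreal (LINT u:{0..C1}|lborel. \<psi> u / u) = ennreal (C1 / S)" .
    moreover have "0 \<le> (LINT u:{0..C1}|lborel. \<psi> u / u)"
      unfolding set_lebesgue_integral_def using f2_nn unfolding f2_def
      by (intro integral_nonneg_AE) (auto split: split_indicator)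
    ultimately show ?thesis using C1pos Spos by simp
  qed
  have sum1: "(LINT u:{0..C1}|lborel. \<psi> u / u) + r / \<xi>p = 1"
  proof -
    have "C1 / S + 2 * C2\<^sup>2 / S / \<xi>p = (C1 * \<xi>p + 2 * C2\<^sup>2) / (S * \<xi>p)" using Spos xpos by (simp add: field_simps)
    also have "C1 * \<xi>p + 2 * C2\<^sup>2 = S * \<xi>p" using Sx2 xpos C1x by (simp add: field_simps power2_eq_square)
    finally show ?thesis unfolding val_f2 r_eq using Spos xpos by simp
  qed
  have main: "JKD_perm phi ainf K0 eta rhof Lambda \<omega> =
          complex_of_real (\<nu> / F) *
            ((LINT u:{0..C1}|lborel.
                complex_of_real (u * (\<psi> u / u)) / (1 - \<i> * complex_of_real (\<omega> * u)))
             + complex_of_real (\<xi>p * (r / \<xi>p)) / (1 - \<i> * complex_of_real (\<omega> * \<xi>p)))" for \<omega>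
  proof -
    define k3 where "k3 = csqrt (1 - \<i> * complex_of_real (C1 * \<omega>))"
    have k3sq: "k3\<^sup>2 = 1 - \<i> * complex_of_real (C1 * \<omega>)" by (simp add: k3_def)
    have k3re: "0 < Re k3" unfolding k3_def by (intro csqrt_Re_pos) simp
    have k3ne: "k3\<^sup>2 \<noteq> complex_of_real y" if "y \<noteq> 1" for y
    proof
      assume "k3\<^sup>2 = complex_of_real y"
      then have "Re (k3\<^sup>2) = y" by simp
      then show False using that unfolding k3sq by simp
    qed
    define k1 where "k1 = complex_of_real a"
    define k2 where "k2 = complex_of_real b"
    have k1sq: "k1\<^sup>2 = complex_of_real (a\<^sup>2)" and k2sq: "k2\<^sup>2 = complex_of_real (b\<^sup>2)"
      by (simp_all add: k1_def k2_def)
    have absq: "a\<^sup>2 \<noteq> b\<^sup>2" using apos bpos aneb by (simp add: power2_eq_iff_nonneg)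
    have k13: "k1 \<noteq> k3" using k3ne[OF asq] k1sq by auto
    have k23: "k2 \<noteq> k3" using k3ne[OF bsq] k2sq by auto
    have k12: "k1 \<noteq> k2" using aneb by (simp add: k1_def k2_def)
    have p12: "k1\<^sup>2 \<noteq> k2\<^sup>2" using absq by (metis k1sq k2sq of_real_eq_iff)
    have p13: "k1\<^sup>2 \<noteq> k3\<^sup>2" using k3ne[OF asq] unfolding k1sq by metis
    have p23: "k2\<^sup>2 \<noteq> k3\<^sup>2" using k3ne[OF bsq] unfolding k2sq by metis
    have s12: "k1 + k2 \<noteq> 0" using apos bpos by (simp add: k1_def k2_def flip: of_real_add)
    have s13: "k1 + k3 \<noteq> 0"
    proof
      assume "k1 + k3 = 0" then have "Re (k1 + k3) = 0" by simp
      then show False using apos k3re by (simp add: k1_def)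
    qed
    have s23: "k2 + k3 \<noteq> 0"
    proof
      assume "k2 + k3 = 0" then have "Re (k2 + k3) = 0" by simp
      then show False using bpos k3re by (simp add: k2_def)
    qed
    define X where "X = (\<lambda>\<phi>::real. (complex_of_real (sin \<phi>))\<^sup>2)"
    define d where "d = (\<lambda>p \<phi>. 1 - (1 - p) * X \<phi>)"
    have vint: "((\<lambda>\<phi>. 1 / d (k\<^sup>2) \<phi>) has_integral (complex_of_real pi / (2 * k))) {0..pi/2}"
      if "Re (1 - k\<^sup>2) < 1" "csqrt (1 - (1 - k\<^sup>2)) = k" for k :: complex
      using int_A[of "1 - k\<^sup>2"] that unfolding d_def X_def by simp
    have v1: "((\<lambda>\<phi>. 1 / d (k1\<^sup>2) \<phi>) has_integral (complex_of_real pi / (2 * k1))) {0..pi/2}"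
    proof (rule vint)
      show "Re (1 - k1\<^sup>2) < 1" using apos unfolding k1sq by simp
      have "csqrt (complex_of_real (a\<^sup>2)) = complex_of_real a"
        using apos of_real_sqrt[of "a\<^sup>2"] by simp
      then show "csqrt (1 - (1 - k1\<^sup>2)) = k1" unfolding k1sq k1_def by simp
    qed
    have v2: "((\<lambda>\<phi>. 1 / d (k2\<^sup>2) \<phi>) has_integral (complex_of_real pi / (2 * k2))) {0..pi/2}"
    proof (rule vint)
      show "Re (1 - k2\<^sup>2) < 1" using bpos unfolding k2sq by simp
      have "csqrt (complex_of_real (b\<^sup>2)) = complex_of_real b"
        using bpos of_real_sqrt[of "b\<^sup>2"] by simp
      then show "csqrt (1 - (1 - k2\<^sup>2)) = k2" unfolding k2sq k2_def by simp
    qed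
    have v3: "((\<lambda>\<phi>. 1 / d (k3\<^sup>2) \<phi>) has_integral (complex_of_real pi / (2 * k3))) {0..pi/2}"
    proof (rule vint)
      show "Re (1 - k3\<^sup>2) < 1" unfolding k3sq by simp
      show "csqrt (1 - (1 - k3\<^sup>2)) = k3" unfolding k3sq by (simp add: k3_def)
    qed
    have k1n: "k1 \<noteq> 0" and k2n: "k2 \<noteq> 0" using apos bpos by (simp_all add: k1_def k2_def)
    have k3n: "k3 \<noteq> 0" using k3re by auto
    define E where "E = (\<lambda>\<phi>. complex_of_real K * ((1 / (k1\<^sup>2 - k2\<^sup>2)) *
        ((k3\<^sup>2 * (1 / d (k3\<^sup>2) \<phi>) - k2\<^sup>2 * (1 / d (k2\<^sup>2) \<phi>)) / (k3\<^sup>2 - k2\<^sup>2)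
       - (k3\<^sup>2 * (1 / d (k3\<^sup>2) \<phi>) - k1\<^sup>2 * (1 / d (k1\<^sup>2) \<phi>)) / (k3\<^sup>2 - k1\<^sup>2))))"
    have Eint: "(E has_integral (complex_of_real K * ((1 / (k1\<^sup>2 - k2\<^sup>2)) *
        ((k3\<^sup>2 * (complex_of_real pi / (2 * k3)) - k2\<^sup>2 * (complex_of_real pi / (2 * k2))) / (k3\<^sup>2 - k2\<^sup>2)
       - (k3\<^sup>2 * (complex_of_real pi / (2 * k3)) - k1\<^sup>2 * (complex_of_real pi / (2 * k1))) / (k3\<^sup>2 - k1\<^sup>2))))) {0..pi/2}"
      unfolding E_def by (intro has_integral_mult_right has_integral_divide has_integral_diff v1 v2 v3)
    have kk: "k\<^sup>2 * (complex_of_real pi / (2 * k)) = (complex_of_real pi / 2) * k" if "k \<noteq> 0" for k :: complex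
      using that by (simp add: power2_eq_square)
    have VE: "complex_of_real K * ((1 / (k1\<^sup>2 - k2\<^sup>2)) *
        ((k3\<^sup>2 * (complex_of_real pi / (2 * k3)) - k2\<^sup>2 * (complex_of_real pi / (2 * k2))) / (k3\<^sup>2 - k2\<^sup>2)
       - (k3\<^sup>2 * (complex_of_real pi / (2 * k3)) - k1\<^sup>2 * (complex_of_real pi / (2 * k1))) / (k3\<^sup>2 - k1\<^sup>2)))
       = complex_of_real (C1\<^sup>2 / C2) / ((k1 + k2) * (k1 + k3) * (k2 + k3))"
    proof -
      have "complex_of_real K * ((1 / (k1\<^sup>2 - k2\<^sup>2)) *
        ((k3\<^sup>2 * (complex_of_real pi / (2 * k3)) - k2\<^sup>2 * (complex_of_real pi / (2 * k2))) / (k3\<^sup>2 - k2\<^sup>2)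
       - (k3\<^sup>2 * (complex_of_real pi / (2 * k3)) - k1\<^sup>2 * (complex_of_real pi / (2 * k1))) / (k3\<^sup>2 - k1\<^sup>2)))
       = complex_of_real K * (complex_of_real pi / 2) * ((1 / (k1\<^sup>2 - k2\<^sup>2)) * ((k3 - k2) / (k3\<^sup>2 - k2\<^sup>2) - (k3 - k1) / (k3\<^sup>2 - k1\<^sup>2)))"
        unfolding kk[OF k1n] kk[OF k2n] kk[OF k3n] by (simp add: algebra_simps diff_divide_distrib)
      also have "\<dots> = complex_of_real K * (complex_of_real pi / 2) * (1 / ((k1 + k2) * (k1 + k3) * (k2 + k3)))"
        using sumk'[OF s12 s13 s23 k12 k13 k23] by simp
      also have "\<dots> = complex_of_real (C1\<^sup>2 / C2) / ((k1 + k2) * (k1 + k3) * (k2 + k3))"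
        unfolding K_def by simp
      finally show ?thesis .
    qed
    define f\<psi> where "f\<psi> = (\<lambda>u. complex_of_real (\<psi> u) / (1 - \<i> * complex_of_real (\<omega> * u)))"
    have den3: "1 - \<i> * complex_of_real y \<noteq> 0" for y
    proof
      assume "1 - \<i> * complex_of_real y = 0" then have "Re (1 - \<i> * complex_of_real y) = 0" by simp
      then show False by simp
    qed
    have pw: "g' \<phi> *\<^sub>R f\<psi> (g \<phi>) = E \<phi>" if "\<phi> \<in> {0..pi/2}" for \<phi>
    proof -
      have d1: "d (k1\<^sup>2) \<phi> = complex_of_real (1 - (1 - a\<^sup>2) * (sin \<phi>)\<^sup>2)" unfolding d_def X_def k1sq by simp
      have d2: "d (k2\<^sup>2) \<phi> = complex_of_real (1 - (1 - b\<^sup>2) * (sin \<phi>)\<^sup>2)" unfolding d_def X_def k2sq by simp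
      have d3: "d (k3\<^sup>2) \<phi> = 1 - \<i> * complex_of_real (\<omega> * g \<phi>)" unfolding d_def X_def k3sq g_def
        by (simp add: algebra_simps)
      have "0 < 1 - (1 - a\<^sup>2) * (sin \<phi>)\<^sup>2" "0 < 1 - (1 - b\<^sup>2) * (sin \<phi>)\<^sup>2"
        using dpos apos bpos sc(4)[OF that] by auto
      then have nz: "d (k1\<^sup>2) \<phi> \<noteq> 0" "d (k2\<^sup>2) \<phi> \<noteq> 0" "d (k3\<^sup>2) \<phi> \<noteq> 0"
        unfolding d1 d2 d3 using den3 by (auto simp del: of_real_diff of_real_mult of_real_power)
      have "g' \<phi> *\<^sub>R f\<psi> (g \<phi>) = complex_of_real (g' \<phi> * \<psi> (g \<phi>)) / d (k3\<^sup>2) \<phi>"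
        unfolding f\<psi>_def d3 by (simp add: scaleR_conv_of_real)
      also have "complex_of_real (g' \<phi> * \<psi> (g \<phi>)) = complex_of_real K * (X \<phi> * (1 - X \<phi>) / (d (k1\<^sup>2) \<phi> * d (k2\<^sup>2) \<phi>))"
        unfolding Rmain[OF that] d1 d2 X_def by simp
      also have "complex_of_real K * (X \<phi> * (1 - X \<phi>) / (d (k1\<^sup>2) \<phi> * d (k2\<^sup>2) \<phi>)) / d (k3\<^sup>2) \<phi>
          = complex_of_real K * (X \<phi> * (1 - X \<phi>) / (d (k1\<^sup>2) \<phi> * d (k2\<^sup>2) \<phi> * d (k3\<^sup>2) \<phi>))" by simp
      also have "X \<phi> * (1 - X \<phi>) / (d (k1\<^sup>2) \<phi> * d (k2\<^sup>2) \<phi> * d (k3\<^sup>2) \<phi>)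
          = (1 / (k1\<^sup>2 - k2\<^sup>2)) * ((k3\<^sup>2 / d (k3\<^sup>2) \<phi> - k2\<^sup>2 / d (k2\<^sup>2) \<phi>) / (k3\<^sup>2 - k2\<^sup>2)
                       - (k3\<^sup>2 / d (k3\<^sup>2) \<phi> - k1\<^sup>2 / d (k1\<^sup>2) \<phi>) / (k3\<^sup>2 - k1\<^sup>2))"
        unfolding d_def by (rule pf3') (use p12 p13 p23 nz in \<open>auto simp: d_def\<close>)
      finally show ?thesis unfolding E_def by simp
    qed
    have cont: "continuous_on {0..C1} f\<psi>"
      unfolding f\<psi>_def \<psi>_def
      apply (intro continuous_intros)
      using den_pos den3 apply auto
      apply (metis atLeastAtMost_iff den_pos less_irrefl)
      done
    have subst: "((\<lambda>\<phi>. g' \<phi> *\<^sub>R f\<psi> (g \<phi>)) has_integral integral {g 0..g (pi/2)} f\<psi>) {0..pi/2}"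
    proof (rule has_integral_substitution[where c=0 and d=C1])
      show "0 \<le> pi / 2" by simp
      show "g 0 \<le> g (pi/2)" using C1pos by (simp add: g_def)
      show "g ` {0..pi/2} \<subseteq> {0..C1}"
      proof
        fix y assume "y \<in> g ` {0..pi/2}"
        then obtain \<phi> where "\<phi> \<in> {0..pi/2}" "y = g \<phi>" by auto
        then show "y \<in> {0..C1}" using sc(4)[of \<phi>] C1pos
          by (auto simp: g_def intro: mult_left_le[of "(sin \<phi>)\<^sup>2" C1, simplified mult.commute])
      qed
      show "continuous_on {0..C1} f\<psi>" by (rule cont)
      show "(g has_field_derivative g' x) (at x within {0..pi/2})" for x
        using gder by (rule has_field_derivative_at_within)
    qed
    have Ival: "integral {0..C1} f\<psi> = complex_of_real (C1\<^sup>2 / C2) / ((k1 + k2) * (k1 + k3) * (k2 + k3))"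
    proof -
      have "(E has_integral integral {0..C1} f\<psi>) {0..pi/2}"
        using has_integral_eq[OF pw subst] unfolding g0 gpi by simp
      from has_integral_unique[OF this Eint] show ?thesis unfolding VE .
    qed
    have fpsi_eq: "(\<lambda>u. complex_of_real (u * (\<psi> u / u)) / (1 - \<i> * complex_of_real (\<omega> * u))) = f\<psi>"
    proof
      fix u
      have "u * (\<psi> u / u) = \<psi> u" by (cases "u = 0") (simp_all add: \<psi>_def)
      then show "complex_of_real (u * (\<psi> u / u)) / (1 - \<i> * complex_of_real (\<omega> * u)) = f\<psi> u"
        by (simp add: f\<psi>_def)
    qed
    have LINTeq: "(LINT u:{0..C1}|lborel. complex_of_real (u * (\<psi> u / u)) / (1 - \<i> * complex_of_real (\<omega> * u)))
        = integral {0..C1} f\<psi>"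
    proof -
      have "set_integrable lborel {0..C1} f\<psi>"
        unfolding set_integrable_def by (rule borel_integrable_compact) (simp_all add: cont)
      then show ?thesis unfolding fpsi_eq by (rule set_borel_integral_eq_integral(2))
    qed
    have C1w: "4 * ainf\<^sup>2 * K0\<^sup>2 * rhof * \<omega> / (eta * Lambda\<^sup>2 * phi\<^sup>2) = C1 * \<omega>"
      unfolding C1_def C2_def F_def \<nu>_def using assms by (simp add: field_simps power2_eq_square)
    have C2w: "ainf * K0 * rhof * \<omega> / (eta * phi) = C2 * \<omega>"
      unfolding C2_def F_def \<nu>_def using assms by (simp add: field_simps)
    have nuF: "\<nu> / F = K0 / C2" unfolding C2_def using nupos Fpos assms by (simp add: field_simps)
    have JK: "JKD_perm phi ainf K0 eta rhof Lambda \<omega> = complex_of_real K0 / (k3 - \<i> * complex_of_real (C2 * \<omega>))"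
      unfolding JKD_perm_def C1w C2w k3_def by simp
    define p where "p = complex_of_real \<xi>p"
    define c where "c = complex_of_real C2"
    define t where "t = \<i> * complex_of_real \<omega>"
    have c0: "c \<noteq> 0" and p0: "p \<noteq> 0" using C2pos xpos by (simp_all add: c_def p_def)
    have pc: "\<xi>p\<^sup>2 - C2\<^sup>2 = C1 * \<xi>p" using prod by (simp add: algebra_simps power2_eq_square)
    have D0: "p\<^sup>2 - c\<^sup>2 \<noteq> 0"
    proof -
      have "p\<^sup>2 - c\<^sup>2 = complex_of_real (C1 * \<xi>p)" unfolding p_def c_def pc[symmetric] by simp
      then show ?thesis using C1pos xpos by simp
    qed
    have E0: "p\<^sup>2 + c\<^sup>2 \<noteq> 0"
    proof -
      have "p\<^sup>2 + c\<^sup>2 = complex_of_real (\<xi>p\<^sup>2 + C2\<^sup>2)" unfolding p_def c_def by simp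
      moreover have "0 < \<xi>p\<^sup>2 + C2\<^sup>2" using xpos by (simp add: add_pos_nonneg)
      ultimately show ?thesis by (metis of_real_eq_0_iff less_irrefl)
    qed
    have tk: "t * (p\<^sup>2 - c\<^sup>2) = p * (1 - k3\<^sup>2)"
    proof -
      have "p\<^sup>2 - c\<^sup>2 = complex_of_real (C1 * \<xi>p)" unfolding p_def c_def pc[symmetric] by simp
      then show ?thesis unfolding k3sq t_def p_def by (simp add: algebra_simps)
    qed
    have A0: "c * k3 + p \<noteq> 0"
    proof
      assume "c * k3 + p = 0" then have "Re (c * k3 + p) = 0" by simp
      then show False using C2pos xpos k3re unfolding c_def p_def by simp (smt (verit) mult_pos_pos)
    qed
    have C0: "p * k3 + c \<noteq> 0"
    proof
      assume "p * k3 + c = 0" then have "Re (p * k3 + c) = 0" by simp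
      then show False using C2pos xpos k3re unfolding c_def p_def by simp (smt (verit) mult_pos_pos)
    qed
    have e2: "c / p = k1" unfolding c_def p_def k1_def a_def by simp
    have e3: "p / c = k2" unfolding c_def p_def k2_def b_def by simp
    have B0: "p * k3 - c \<noteq> 0"
    proof
      assume "p * k3 - c = 0"
      then have "k3 = c / p" using p0 by (simp add: field_simps)
      then show False using k13 e2 by simp
    qed
    have e1: "(p\<^sup>2 - c\<^sup>2) / p = complex_of_real C1"
      unfolding p_def c_def using C1x by simp
    have e4: "2 * c\<^sup>2 * p / (p\<^sup>2 + c\<^sup>2) = complex_of_real r"
    proof -
      have "r = 2 * C2\<^sup>2 * \<xi>p / (\<xi>p\<^sup>2 + C2\<^sup>2)" unfolding r_eq Sx2 using xpos by simp
      then show ?thesis unfolding p_def c_def by simp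
    qed
    have e5: "c * t = \<i> * complex_of_real (C2 * \<omega>)" unfolding c_def t_def by simp
    have e6: "1 - t * p = 1 - \<i> * complex_of_real (\<omega> * \<xi>p)" unfolding t_def p_def by simp
    have FA: "1 / (k3 - \<i> * complex_of_real (C2 * \<omega>)) = (1 / c) * ((complex_of_real C1)\<^sup>2 / c / ((k1 + k2) * (k1 + k3) * (k2 + k3))
             + complex_of_real r / (1 - \<i> * complex_of_real (\<omega> * \<xi>p)))"
      using final_alg[OF c0 p0 D0 E0 tk A0 B0 C0] unfolding e1 e2 e3 e4 e5 e6 .
    have rr: "complex_of_real (\<xi>p * (r / \<xi>p)) = complex_of_real r" using xpos by simp
    have "complex_of_real K0 / (k3 - \<i> * complex_of_real (C2 * \<omega>)) = complex_of_real K0 * (1 / (k3 - \<i> * complex_of_real (C2 * \<omega>)))"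
      by simp
    also have "\<dots> = complex_of_real (K0 / C2) * (complex_of_real (C1\<^sup>2 / C2) / ((k1 + k2) * (k1 + k3) * (k2 + k3))
             + complex_of_real r / (1 - \<i> * complex_of_real (\<omega> * \<xi>p)))"
      unfolding FA c_def by simp
    finally show ?thesis unfolding JK LINTeq Ival nuF rr .
  qed
  show ?thesis using xgt r0 psi_nn int_f2 sum1 main by blast
qed
end
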